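(* If $n\xrightarrow{b|c} m$ is a transition of $\mathcal{D}_{p/q}$, then $$c=(b-(n+1)p)\bmod q\qquad\text{and}\qquad m=\left\lceil \frac{(n+1)p-b}{q}-1\right\rceil .$$
   Context: Let $p>q>1$ be coprime integers, $A_q=\{0,\dots,q-1\}$ and $B=\{p-(2q-1),\dots,p-1\}$. For $n\in\mathbb{N}$ and $a\in\mathbb{Z}$, let $\tau(n,a)=\frac{np+a}{q}$, defined only when $q$ divides $np+a$. For $a\in B$ let $\omega(a)=\{(b,c)\in A_q\times A_q : c-b=a-(p-q)\}$. The transducer $\mathcal{D}_{p/q}$ has state set $\mathbb{N}$, input and output alphabet $A_q$, and a transition $n\xrightarrow{b|c}\tau(n,a)$ (input $b$, output $c$) for every $n\in\mathbb{N}$, $a\in B$ with $\tau(n,a)$ defined, and $(b,c)\in\omega(a)$; no other transitions. Here $x\bmod q\in\{0,\dots,q-1\}$ is the remainder of Euclidean division, and $\lceil x\rceil$ is the integer $k$ with $k-1<x\le k$. *)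

theory Defs
  imports Complex_Main
begin

definition A :: "int \<Rightarrow> int set" where
  "A q = {0..q-1}"

definition B :: "int \<Rightarrow> int \<Rightarrow> int set" where
  "B p q = {p-(2*q-1)..p-1}"

definition tau :: "int \<Rightarrow> int \<Rightarrow> int \<Rightarrow> int \<Rightarrow> int option" where
  "tau p q n a = (if q dvd (n*p+a) then Some ((n*p+a) div q) else None)"

definition omega :: "int \<Rightarrow> int \<Rightarrow> int \<Rightarrow> (int \<times> int) set" where
  "omega p q a = {(b,c). b \<in> A q \<and> c \<in> A q \<and> c - b = a - (p - q)}"

definition transition :: "int \<Rightarrow> int \<Rightarrow> nat \<Rightarrow> int \<Rightarrow> int \<Rightarrow> nat \<Rightarrow> bool" where
  "transition p q n b c m \<longleftrightarrow>
     (\<exists>a \<in> B p q. tau p q (int n) a = Some (int m) \<and> (b, c) \<in> omega p q a)"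

end

theory Submission
  imports Defs
begin

theorem mainTheorem4:
  fixes p q :: int and n m :: nat and b c :: int
  assumes "p > q" and "q > 1" and "coprime p q"
    and "transition p q n b c m"
  shows "c = (b - (int n + 1) * p) mod q
       \<and> int m = \<lceil>real_of_int ((int n + 1) * p - b) / real_of_int q - 1\<rceil>"
proof -
  obtain a where t: "tau p q (int n) a = Some (int m)" and bc: "(b, c) \<in> omega p q a"
    using assms(4) unfolding transition_def by blast
  have dv: "q dvd (int n*p+a)" and md: "int m = (int n*p+a) div q"
    using t unfolding tau_def by (auto split: if_splits)
  have qm: "q * int m = int n*p+a" using dv md by simp
  have c0: "0 \<le> c" "c < q" and cb: "c - b = a - (p - q)"
    using bc unfolding omega_def A_def by auto
  have key: "b - (int n + 1) * p = c + q * (-(int m + 1))"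
    using qm cb by (simp add: algebra_simps)
  have "c = (b - (int n + 1) * p) mod q"
    unfolding key using c0 by simp
  moreover have "int m = \<lceil>real_of_int ((int n + 1) * p - b) / real_of_int q - 1\<rceil>"
  proof -
    have e: "real_of_int ((int n + 1) * p - b) = real_of_int q * (real_of_int (int m) + 1) - real_of_int c"
    proof -
      have "(int n + 1) * p - b = q * (int m + 1) - c" using key by (simp add: algebra_simps)
      hence "real_of_int ((int n + 1) * p - b) = real_of_int (q * (int m + 1) - c)" by simp
      thus ?thesis by simp
    qed
    have qp: "real_of_int q > 0" using assms(2) by simp
    have x: "real_of_int ((int n + 1) * p - b) / real_of_int q - 1 = real_of_int (int m) - real_of_int c / real_of_int q"
      unfolding e using qp by (simp add: field_simps)
    have "real_of_int c / real_of_int q < 1" "0 \<le> real_of_int c / real_of_int q"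
      using c0 qp by (auto simp: divide_simps)
    thus ?thesis unfolding x by (intro ceiling_unique[symmetric]) auto
  qed
  ultimately show ?thesis by blast
qed

end
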